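(* Let $n\ge1$, $\alpha\in(0,\infty)$, $t\in(0,\infty)$, $p\in(0,\infty]$, $r\in(1,\infty)$ and $q\in[1,\infty]$. Then $(KE_{q,r}^{\alpha,p})_t(\mathbb{R}^n)=(\dot{K}E_{q,r}^{\alpha,p})_t(\mathbb{R}^n)\cap(E_r^q)_t(\mathbb{R}^n)$, and for $f\in(\dot{K}E_{q,r}^{\alpha,p})_t(\mathbb{R}^n)\cap(E_r^q)_t(\mathbb{R}^n)$, $\|f\|_{(KE_{q,r}^{\alpha,p})_t(\mathbb{R}^n)}\sim\|f\|_{(\dot{K}E_{q,r}^{\alpha,p})_t(\mathbb{R}^n)}+\|f\|_{(E_r^q)_t(\mathbb{R}^n)}$, where $A\sim B$ means $C^{-1}B\le A\le CB$ for a constant $C>0$ independent of $f$.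
   Context: For $x\in\mathbb{R}^n$ and $s>0$, $B(x,s)$ is the Euclidean ball of centre $x$ and radius $s$, $|E|$ is Lebesgue measure and $\mathbf{1}_E$ the indicator of $E$. For $t\in(0,\infty)$, $r\in(1,\infty)$, $q\in[1,\infty]$, the slice space $(E_r^q)_t(\mathbb{R}^n)$ is the set of measurable $f$ on $\mathbb{R}^n$ with $\|f\|_{(E_r^q)_t(\mathbb{R}^n)}:=\Big\| x\mapsto\Big(\frac{1}{|B(x,t)|}\int_{B(x,t)}|f(y)|^r\,dy\Big)^{1/r}\Big\|_{L^q(\mathbb{R}^n)}<\infty$. For $k\in\mathbb{Z}$ let $B_k=\{x:|x|\le 2^k\}$ and $S_k=B_k\setminus B_{k-1}$. For $\alpha\in\mathbb{R}$, $p\in(0,\infty]$, the homogeneous Herz-slice space $(\dot{K}E_{q,r}^{\alpha,p})_t(\mathbb{R}^n)$ is the set of measurable $f$ with $\|f\|_{(\dot{K}E_{q,r}^{\alpha,p})_t}:=\Big(\sum_{k\in\mathbb{Z}}2^{k\alpha p}\|f\mathbf{1}_{S_k}\|_{(E_r^q)_t(\mathbb{R}^n)}^p\Big)^{1/p}<\infty$, and the non-homogeneous Herz-slice space $(KE_{q,r}^{\alpha,p})_t(\mathbb{R}^n)$ is the set of measurable $f$ with $\|f\|_{(KE_{q,r}^{\alpha,p})_t}:=\Big(\|f\mathbf{1}_{B_0}\|_{(E_r^q)_t(\mathbb{R}^n)}^p+\sum_{k=1}^{\infty}2^{k\alpha p}\|f\mathbf{1}_{S_k}\|_{(E_r^q)_t(\mathbb{R}^n)}^p\Big)^{1/p}<\infty$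 (the term $k=0$ uses $B_0$ in place of $S_0$), with the sums replaced by suprema when $p=\infty$. *)

theory Defs
  imports "HOL-Analysis.Analysis"
begin

text \<open>Real power on extended nonnegative reals (only used with positive exponents):
  infinity to a positive power is infinity.\<close>
definition epowr :: "ennreal \<Rightarrow> real \<Rightarrow> ennreal" where
  "epowr x a = (if x = \<infinity> then (if a > 0 then \<infinity> else if a = 0 then 1 else 0)
                else ennreal (enn2real x powr a))"

definition local_avg :: "real \<Rightarrow> real \<Rightarrow> ('a::euclidean_space \<Rightarrow> real) \<Rightarrow> 'a \<Rightarrow> ennreal" where
  "local_avg r t f x =
     epowr ((\<integral>\<^sup>+ y\<in>ball x t. ennreal (\<bar>f y\<bar> powr r) \<partial>lebesgue) / emeasure lebesgue (ball x t)) (1 / r)"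

definition Lq_norm :: "ennreal \<Rightarrow> ('a::euclidean_space \<Rightarrow> ennreal) \<Rightarrow> ennreal" where
  "Lq_norm q g = (if q = \<infinity> then Inf {C. AE x in lebesgue. g x \<le> C}
                  else epowr (\<integral>\<^sup>+ x. epowr (g x) (enn2real q) \<partial>lebesgue) (1 / enn2real q))"

definition slice_norm :: "ennreal \<Rightarrow> real \<Rightarrow> real \<Rightarrow> ('a::euclidean_space \<Rightarrow> real) \<Rightarrow> ennreal" where
  "slice_norm q r t f = Lq_norm q (local_avg r t f)"

definition slice_space :: "ennreal \<Rightarrow> real \<Rightarrow> real \<Rightarrow> ('a::euclidean_space \<Rightarrow> real) set" where
  "slice_space q r t = {f. f \<in> borel_measurable lebesgue \<and> slice_norm q r t f < \<infinity>}"

text \<open>Annuli S_k = B_k - B_{k-1}, B_k = {x. |x| \<le> 2^k}.\<close>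
definition annulus :: "int \<Rightarrow> ('a::euclidean_space) set" where
  "annulus k = {x. 2 powr (real_of_int k - 1) < norm x \<and> norm x \<le> 2 powr (real_of_int k)}"

definition hom_herz_norm :: "real \<Rightarrow> ennreal \<Rightarrow> ennreal \<Rightarrow> real \<Rightarrow> real \<Rightarrow> ('a::euclidean_space \<Rightarrow> real) \<Rightarrow> ennreal" where
  "hom_herz_norm \<alpha> p q r t f =
     (if p = \<infinity> then (SUP k::int. ennreal (2 powr (real_of_int k * \<alpha>))
                        * slice_norm q r t (\<lambda>x. indicator (annulus k) x * f x))
      else epowr (\<integral>\<^sup>+ k. ennreal (2 powr (real_of_int k * \<alpha> * enn2real p))
                 * epowr (slice_norm q r t (\<lambda>x. indicator (annulus k) x * f x)) (enn2real p)
               \<partial>(count_space (UNIV :: int set))) (1 / enn2real p))"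

definition hom_herz_space :: "real \<Rightarrow> ennreal \<Rightarrow> ennreal \<Rightarrow> real \<Rightarrow> real \<Rightarrow> ('a::euclidean_space \<Rightarrow> real) set" where
  "hom_herz_space \<alpha> p q r t = {f. f \<in> borel_measurable lebesgue \<and> hom_herz_norm \<alpha> p q r t f < \<infinity>}"

definition inhom_herz_norm :: "real \<Rightarrow> ennreal \<Rightarrow> ennreal \<Rightarrow> real \<Rightarrow> real \<Rightarrow> ('a::euclidean_space \<Rightarrow> real) \<Rightarrow> ennreal" where
  "inhom_herz_norm \<alpha> p q r t f =
     (if p = \<infinity> then max (slice_norm q r t (\<lambda>x. indicator (cball 0 1) x * f x))
                         (SUP k\<in>{1::nat..}. ennreal (2 powr (real k * \<alpha>))
                            * slice_norm q r t (\<lambda>x. indicator (annulus (int k)) x * f x))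
      else epowr (epowr (slice_norm q r t (\<lambda>x. indicator (cball 0 1) x * f x)) (enn2real p)
                  + (\<Sum>k. ennreal (2 powr (real (Suc k) * \<alpha> * enn2real p))
                       * epowr (slice_norm q r t (\<lambda>x. indicator (annulus (int (Suc k))) x * f x)) (enn2real p)))
                 (1 / enn2real p))"

definition inhom_herz_space :: "real \<Rightarrow> ennreal \<Rightarrow> ennreal \<Rightarrow> real \<Rightarrow> real \<Rightarrow> ('a::euclidean_space \<Rightarrow> real) set" where
  "inhom_herz_space \<alpha> p q r t = {f. f \<in> borel_measurable lebesgue \<and> inhom_herz_norm \<alpha> p q r t f < \<infinity>}"

end

theory Submission
  imports Defs "HOL-Analysis.Analysis"
begin

lemma epowr_ennreal: "0 \<le> x \<Longrightarrow> epowr (ennreal x) a = ennreal (x powr a)"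
  by (simp add: epowr_def)

lemma epowr_top: "a > 0 \<Longrightarrow> epowr top a = top"
  by (simp add: epowr_def)

lemma epowr_zero: "a > 0 \<Longrightarrow> epowr 0 a = 0"
  by (simp add: epowr_def)

lemma epowr_one: "epowr x 1 = x"
  by (cases x rule: ennreal_cases) (simp_all add: epowr_def)

lemma epowr_mono: assumes "a > 0" "x \<le> y" shows "epowr x a \<le> epowr y a"
proof (cases y rule: ennreal_cases)
  case (real b)
  then obtain c where "x = ennreal c" "0 \<le> c" "c \<le> b" using assms
    by (cases x rule: ennreal_cases) (auto simp: top_unique)
  then show ?thesis using real assms by (simp add: epowr_def powr_mono2)
next
  case top
  then show ?thesis using assms by (simp add: epowr_top)
qed

lemma epowr_eq_top_iff: "a > 0 \<Longrightarrow> epowr x a = top \<longleftrightarrow> x = top"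
  by (cases x rule: ennreal_cases) (simp_all add: epowr_def)

lemma epowr_eq_0_iff: "a > 0 \<Longrightarrow> epowr x a = 0 \<longleftrightarrow> x = 0"
  by (cases x rule: ennreal_cases) (simp_all add: epowr_def)

lemma epowr_epowr: assumes "a > 0" "b > 0" shows "epowr (epowr x a) b = epowr x (a * b)"
  using assms by (cases x rule: ennreal_cases) (simp_all add: epowr_def powr_powr)

lemma epowr_inv1: "a > 0 \<Longrightarrow> epowr (epowr x a) (1/a) = x"
  by (simp add: epowr_epowr epowr_one)

lemma epowr_inv2: "a > 0 \<Longrightarrow> epowr (epowr x (1/a)) a = x"
  by (simp add: epowr_epowr epowr_one)

lemma epowr_mult: assumes "a > 0" shows "epowr (x * y) a = epowr x a * epowr y a"
proof (cases x rule: ennreal_cases)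
  case (real c)
  show ?thesis
  proof (cases y rule: ennreal_cases)
    case (real d)
    have "x * y = ennreal (c * d)" using \<open>x = _\<close> \<open>y = _\<close> \<open>0 \<le> c\<close> \<open>0 \<le> d\<close> by (simp add: ennreal_mult)
    hence "epowr (x*y) a = ennreal ((c*d) powr a)" using \<open>0 \<le> c\<close> \<open>0 \<le> d\<close>
      by (simp only: epowr_ennreal mult_nonneg_nonneg)
    then show ?thesis using \<open>x = _\<close> \<open>y = _\<close> \<open>0 \<le> c\<close> \<open>0 \<le> d\<close> assms
      by (simp add: epowr_ennreal powr_mult ennreal_mult)
  next
    case top
    then show ?thesis using \<open>x = _\<close> \<open>0 \<le> c\<close> assms
      by (cases "c = 0") (simp_all add: epowr_def ennreal_mult_top)
  qed
next
  case top
  then show ?thesis using assms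
    by (cases "y = 0") (simp_all add: epowr_def ennreal_top_mult epowr_eq_0_iff enn2real_eq_0_iff)
qed

lemma epowr_add_le: assumes "a > 0" shows "epowr (epowr x a + epowr y a) (1/a) \<le> ennreal (2 powr (1/a)) * (x + y)"
proof -
  have m: "max x y \<le> x + y" by (simp add: add_increasing add_increasing2)
  have "epowr x a \<le> epowr (max x y) a" "epowr y a \<le> epowr (max x y) a"
    using epowr_mono[OF assms] by simp_all
  hence "epowr x a + epowr y a \<le> epowr (max x y) a + epowr (max x y) a" by (rule add_mono)
  hence "epowr x a + epowr y a \<le> ennreal 2 * epowr (max x y) a" by (simp add: mult_2)
  hence "epowr (epowr x a + epowr y a) (1/a) \<le> epowr (ennreal 2 * epowr (max x y) a) (1/a)"
    using assms by (intro epowr_mono) simp_all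
  also have "\<dots> = ennreal (2 powr (1/a)) * max x y"
    using assms by (simp only: epowr_mult epowr_inv1 epowr_ennreal[of 2] zero_le_numeral divide_pos_pos zero_less_one)
  also have "\<dots> \<le> ennreal (2 powr (1/a)) * (x + y)"
    by (intro mult_left_mono m) simp
  finally show ?thesis .
qed

lemma ennreal_le_suminf: "(f n :: ennreal) \<le> suminf f"
  using sum_le_suminf[of f "{n}"] by simp

lemma real_sub_aux:
  fixes x S s :: real
  assumes "0 < s" "s \<le> 1" "0 \<le> x" "x powr s \<le> S"
  shows "x \<le> x powr s * S powr (1/s - 1)"
proof (cases "x = 0")
  case True then show ?thesis by simp
next
  case False
  hence xp: "x > 0" using assms by simp
  have "x = x powr s * x powr (1 - s)"
    using xp by (simp add: powr_add[symmetric])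
  also have "x powr (1 - s) = (x powr s) powr (1/s - 1)"
    using assms xp by (simp add: powr_powr algebra_simps)
  also have "\<dots> \<le> S powr (1/s - 1)"
    using assms by (intro powr_mono2) auto
  finally show ?thesis using xp
    by (simp add: mult_left_mono)
qed

lemma epowr_suminf_le:
  assumes s: "0 < s" "s \<le> 1"
  shows "epowr (\<Sum>n. u n) s \<le> (\<Sum>n. epowr (u n) s)"
proof (cases "(\<Sum>n. epowr (u n) s) = top")
  case True then show ?thesis by simp
next
  case False
  define S where "S = enn2real (\<Sum>n. epowr (u n) s)"
  have S0: "0 \<le> S" by (simp add: S_def)
  have S_eq: "(\<Sum>n. epowr (u n) s) = ennreal S"
    using False by (simp add: S_def less_top)
  have "u n \<le> epowr (u n) s * ennreal (S powr (1/s - 1))" for n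
  proof -
    have lt: "epowr (u n) s < top"
      using False ennreal_suminf_lessD[of "\<lambda>n. epowr (u n) s" top n] by (simp add: less_top)
    then obtain x where x: "u n = ennreal x" "0 \<le> x"
      using s epowr_eq_top_iff[of s "u n"] by (cases "u n" rule: ennreal_cases) auto
    have "ennreal (x powr s) \<le> ennreal S"
      using ennreal_le_suminf[of "\<lambda>n. epowr (u n) s" n] x S_eq by (simp add: epowr_ennreal)
    hence "x powr s \<le> S" using S0 by simp
    hence "x \<le> x powr s * S powr (1/s - 1)" using real_sub_aux s x(2) by blast
    hence "ennreal x \<le> ennreal (x powr s * S powr (1/s - 1))" by simp
    thus ?thesis using x by (simp add: epowr_ennreal ennreal_mult)
  qed
  hence "(\<Sum>n. u n) \<le> (\<Sum>n. epowr (u n) s * ennreal (S powr (1/s - 1)))"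
    by (intro suminf_le) auto
  also have "\<dots> = ennreal S * ennreal (S powr (1/s - 1))" using S_eq by simp
  also have "\<dots> = ennreal (S powr (1/s))"
  proof (cases "S = 0")
    case True then show ?thesis by simp
  next
    case False
    hence "S * S powr (1/s - 1) = S powr (1/s)" using S0 by (simp add: powr_add[symmetric] powr_mult_base)
    thus ?thesis using S0 by (simp add: ennreal_mult[symmetric])
  qed
  finally have "epowr (\<Sum>n. u n) s \<le> epowr (ennreal (S powr (1/s))) s"
    using s by (intro epowr_mono) auto
  also have "\<dots> = ennreal S" using s S0 by (simp add: epowr_ennreal powr_powr)
  finally show ?thesis using S_eq by simp
qed

lemma real_jensen_aux:
  fixes Q l x T :: real
  assumes Q: "1 \<le> Q" and l: "0 < l" and x: "0 \<le> x" and T: "0 < T"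
  shows "x \<le> T powr (1/Q) * (l powr (1-Q) * x powr Q / (T * Q) + l * (1 - 1/Q))"
proof (cases "Q = 1")
  case True then show ?thesis using T x l by simp
next
  case False
  hence Q1: "Q > 1" using Q by simp
  define Q' where "Q' = Q / (Q - 1)"
  have Q'1: "Q' > 1" using Q1 by (simp add: Q'_def field_simps)
  have inv: "1/Q + 1/Q' = 1" using Q1 by (simp add: Q'_def field_simps)
  define a where "a = l powr ((1-Q)/Q) * x / T powr (1/Q)"
  define b where "b = l powr ((Q-1)/Q)"
  have a0: "a \<ge> 0" using x by (simp add: a_def)
  have b0: "b \<ge> 0" by (simp add: b_def)
  have "a * b \<le> a powr Q / Q + b powr Q' / Q'"
    by (rule Youngs_inequality[OF Q1 Q'1 inv a0 b0])
  moreover have "a * b = x / T powr (1/Q)"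
  proof -
    have "l powr ((1-Q)/Q) * l powr ((Q-1)/Q) = 1"
    proof -
      have "(1-Q)/Q + (Q-1)/Q = 0" using Q1 by (simp add: field_simps)
      thus ?thesis using l by (simp add: powr_add[symmetric])
    qed
    thus ?thesis by (simp add: a_def b_def field_simps)
  qed
  moreover have "a powr Q = l powr (1-Q) * x powr Q / T"
  proof -
    have "a powr Q = (l powr ((1-Q)/Q)) powr Q * x powr Q / (T powr (1/Q)) powr Q"
      using l x T by (simp add: a_def powr_divide powr_mult)
    also have "\<dots> = l powr (1-Q) * x powr Q / T"
      using Q1 l T by (simp add: powr_powr)
    finally show ?thesis .
  qed
  moreover have "b powr Q' = l"
    using Q1 l by (simp add: b_def powr_powr Q'_def)
  ultimately have y: "x / T powr (1/Q) \<le> (l powr (1-Q) * x powr Q / T) / Q + l / Q'"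
    by simp
  have "l / Q' = l * (1 - 1/Q)" using Q1 by (simp add: Q'_def field_simps)
  with y have "x / T powr (1/Q) \<le> l powr (1-Q) * x powr Q / (T * Q) + l * (1 - 1/Q)"
    by simp
  moreover have "T powr (1/Q) > 0" using T by simp
  ultimately show ?thesis by (simp add: field_simps)
qed

lemma epowr_suminf_jensen:
  assumes Q: "1 \<le> Q" and l: "\<And>n. 0 < l n" and ls: "(\<Sum>n. ennreal (l n)) \<le> 1"
  shows "epowr (\<Sum>n. c n) Q \<le> (\<Sum>n. ennreal (l n powr (1-Q)) * epowr (c n) Q)"
proof (cases "(\<Sum>n. ennreal (l n powr (1-Q)) * epowr (c n) Q) = top")
  case True then show ?thesis by simp
next
  case False
  define T where "T = enn2real (\<Sum>n. ennreal (l n powr (1-Q)) * epowr (c n) Q)"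
  have T0: "0 \<le> T" by (simp add: T_def)
  have T_eq: "(\<Sum>n. ennreal (l n powr (1-Q)) * epowr (c n) Q) = ennreal T"
    using False by (simp add: T_def less_top)
  have Qp: "0 < Q" using Q by simp
  have "\<exists>x. c n = ennreal x \<and> 0 \<le> x" for n
  proof -
    have lt: "ennreal (l n powr (1-Q)) * epowr (c n) Q < top"
      using False ennreal_suminf_lessD[of "\<lambda>n. ennreal (l n powr (1-Q)) * epowr (c n) Q" top n]
      by (simp add: less_top)
    have "c n \<noteq> top"
    proof
      assume "c n = top"
      hence "epowr (c n) Q = top" using Qp epowr_top by simp
      moreover have "l n powr (1-Q) > 0" using l[of n] by simp
      ultimately show False using lt by (simp add: ennreal_mult_top)
    qed
    thus ?thesis by (cases "c n" rule: ennreal_cases) auto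
  qed
  then obtain x where x: "\<And>n. c n = ennreal (x n)" "\<And>n. 0 \<le> x n" by metis
  have term_eq: "ennreal (l n powr (1-Q)) * epowr (c n) Q = ennreal (l n powr (1-Q) * x n powr Q)" for n
    using x[of n] by (simp add: epowr_ennreal ennreal_mult)
  show ?thesis
  proof (cases "T = 0")
    case True
    have "ennreal (l n powr (1-Q) * x n powr Q) = 0" for n
      using ennreal_le_suminf[of "\<lambda>n. ennreal (l n powr (1-Q)) * epowr (c n) Q" n] T_eq True term_eq
      by simp
    hence "x n = 0" for n using l[of n] x(2)[of n] Qp
      by (simp add: ennreal_eq_0_iff) (smt (verit) mult_pos_pos powr_gt_zero powr_eq_0_iff)
    hence "(\<Sum>n. c n) = 0" using x by simp
    thus ?thesis using Qp by (simp add: epowr_zero)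
  next
    case False
    hence Tp: "T > 0" using T0 by simp
    have bnd: "c n \<le> ennreal (T powr (1/Q)) * (ennreal (l n powr (1-Q) * x n powr Q) / ennreal (T * Q)
                   + ennreal (l n) * ennreal (1 - 1/Q))" for n
    proof -
      have r: "x n \<le> T powr (1/Q) * (l n powr (1-Q) * x n powr Q / (T * Q) + l n * (1 - 1/Q))"
        by (rule real_jensen_aux[OF Q l x(2) Tp])
      have q1: "0 \<le> 1 - 1/Q" using Q by (simp add: field_simps)
      have "ennreal (T powr (1/Q) * (l n powr (1-Q) * x n powr Q / (T * Q) + l n * (1 - 1/Q)))
          = ennreal (T powr (1/Q)) * (ennreal (l n powr (1-Q) * x n powr Q) / ennreal (T * Q)
                   + ennreal (l n) * ennreal (1 - 1/Q))"
        using Tp Qp q1 l[of n] x(2)[of n]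
        by (simp add: ennreal_mult divide_ennreal[symmetric, of "l n powr (1-Q) * x n powr Q" "T*Q"] ennreal_plus[symmetric] less_imp_le)
      with r show ?thesis using x(1)[of n] by (metis ennreal_leI)
    qed
    have "(\<Sum>n. c n) \<le> (\<Sum>n. ennreal (T powr (1/Q)) * (ennreal (l n powr (1-Q) * x n powr Q) / ennreal (T * Q)
                   + ennreal (l n) * ennreal (1 - 1/Q)))"
      by (intro suminf_le bnd) auto
    also have "\<dots> = ennreal (T powr (1/Q)) * ((\<Sum>n. ennreal (l n powr (1-Q) * x n powr Q)) / ennreal (T * Q)
                   + (\<Sum>n. ennreal (l n)) * ennreal (1 - 1/Q))"
      by (simp add: suminf_add[symmetric])
    also have "(\<Sum>n. ennreal (l n powr (1-Q) * x n powr Q)) = ennreal T"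
      using T_eq term_eq by simp
    also have "ennreal T / ennreal (T * Q) = ennreal (1/Q)"
      using Tp Qp by (simp add: divide_ennreal)
    also have "ennreal (1/Q) + (\<Sum>n. ennreal (l n)) * ennreal (1 - 1/Q) \<le> ennreal (1/Q) + 1 * ennreal (1 - 1/Q)"
      by (intro add_left_mono mult_right_mono ls) simp
    also have "ennreal (1/Q) + 1 * ennreal (1 - 1/Q) = 1"
      using Q by (simp add: ennreal_plus[symmetric] field_simps)
    finally have "(\<Sum>n. c n) \<le> ennreal (T powr (1/Q))"
      by (simp add: mult_left_mono)
    hence "epowr (\<Sum>n. c n) Q \<le> epowr (ennreal (T powr (1/Q))) Q"
      using Qp by (intro epowr_mono) auto
    also have "\<dots> = ennreal T" using Qp T0 by (simp add: epowr_ennreal powr_powr)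
    finally show ?thesis using T_eq by simp
  qed
qed

lemma measurable_epowr[measurable (raw)]:
  assumes [measurable]: "f \<in> borel_measurable M"
  shows "(\<lambda>x. epowr (f x) a) \<in> borel_measurable M"
proof -
  have "(\<lambda>x. epowr (f x) a) = (\<lambda>x. if f x = top then (if a > 0 then top else if a = 0 then 1 else 0)
          else ennreal (enn2real (f x) powr a))"
    by (simp add: epowr_def fun_eq_iff)
  also have "\<dots> \<in> borel_measurable M" by measurable
  finally show ?thesis .
qed

lemma geometric_ennreal: "0 \<le> \<rho> \<Longrightarrow> \<rho> < 1 \<Longrightarrow> (\<Sum>n. ennreal (\<rho>^n)) = ennreal (1/(1-\<rho>))"
  by (rule suminf_ennreal_eq) (auto intro: geometric_sums)

lemma AE_le_Inf_ess:
  fixes h :: "'a \<Rightarrow> ennreal"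
  shows "AE x in M. h x \<le> Inf {C. AE x in M. h x \<le> C}"
proof (cases "Inf {C. AE x in M. h x \<le> C} = top")
  case True then show ?thesis by (subst True) simp
next
  case False
  define c where "c = Inf {C. AE x in M. h x \<le> C}"
  have "\<exists>C. (AE x in M. h x \<le> C) \<and> C < c + ennreal (1 / Suc m)" for m
  proof -
    have "c < c + ennreal (1 / Suc m)"
      using False by (simp add: c_def ennreal_add_left_cancel_less less_top[symmetric])
    hence "Inf {C. AE x in M. h x \<le> C} < c + ennreal (1 / Suc m)" by (simp add: c_def)
    then obtain C where "C \<in> {C. AE x in M. h x \<le> C}" "C < c + ennreal (1 / Suc m)"
      by (subst (asm) Inf_less_iff) auto
    thus ?thesis by auto
  qed
  then obtain C where C: "\<And>m. AE x in M. h x \<le> C m" "\<And>m. C m < c + ennreal (1 / Suc m)" by metis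
  have "AE x in M. \<forall>m. h x \<le> C m" using C(1) by (simp add: AE_all_countable)
  hence "AE x in M. h x \<le> c"
  proof eventually_elim
    case (elim x)
    show ?case
    proof (rule ennreal_le_epsilon)
      fix e :: real assume "0 < e"
      then obtain m where m: "1 / real (Suc m) < e"
        by (metis nat_approx_posE)
      have "h x \<le> C m" using elim by simp
      also have "\<dots> \<le> c + ennreal (1 / Suc m)" using C(2)[of m] by simp
      also have "\<dots> \<le> c + ennreal e" using m by (intro add_left_mono ennreal_leI) simp
      finally show "h x \<le> c + ennreal e" .
    qed
  qed
  thus ?thesis by (simp add: c_def)
qed

lemma Lq_norm_mono:
  assumes "q \<ge> 1" "\<And>x. g x \<le> h x"
  shows "Lq_norm q g \<le> Lq_norm q h"
proof (cases "q = top")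
  case True
  have "{C. AE x in lebesgue. h x \<le> C} \<subseteq> {C. AE x in lebesgue. g x \<le> C}"
    using assms(2) by (auto elim: AE_mp intro: order_trans)
  then show ?thesis using True unfolding Lq_norm_def by (simp add: Inf_superset_mono)
next
  case False
  have Q: "enn2real q > 0" using assms(1) False
    by (metis enn2real_1 enn2real_mono less_top order_less_le_trans zero_less_one enn2real_nonneg
          order.not_eq_order_implies_strict enn2real_eq_0_iff not_one_le_zero)
  have "(\<integral>\<^sup>+ x. epowr (g x) (enn2real q) \<partial>lebesgue) \<le> (\<integral>\<^sup>+ x. epowr (h x) (enn2real q) \<partial>lebesgue)"
    by (rule nn_integral_mono) (rule epowr_mono[OF Q assms(2)])
  hence "epowr (\<integral>\<^sup>+ x. epowr (g x) (enn2real q) \<partial>lebesgue) (1 / enn2real q)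
     \<le> epowr (\<integral>\<^sup>+ x. epowr (h x) (enn2real q) \<partial>lebesgue) (1 / enn2real q)"
    by (rule epowr_mono[rotated]) (simp add: Q)
  then show ?thesis using False unfolding Lq_norm_def by simp
qed

lemma Q_of_q: assumes "q \<ge> 1" "q \<noteq> top" shows "1 \<le> enn2real q"
  using enn2real_mono[OF assms(1)] assms(2) by (simp add: less_top)

lemma Lq_norm_decay:
  fixes g :: "nat \<Rightarrow> 'a::euclidean_space \<Rightarrow> ennreal" and G :: "'a \<Rightarrow> ennreal"
  assumes q: "q \<ge> 1" and rho: "0 < \<rho>" "\<rho> < 1"
  and meas: "\<And>n. g n \<in> borel_measurable lebesgue"
  and le: "\<And>x. G x \<le> (\<Sum>n. g n x)"
  and nb: "\<And>n. Lq_norm q (g n) \<le> D * ennreal (\<rho>^n)"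
  shows "Lq_norm q G \<le> D * ennreal (1/(1-\<rho>))"
proof (cases "q = top")
  case True
  have geo: "(\<Sum>n. ennreal (\<rho>^n)) = ennreal (1/(1-\<rho>))"
    by (rule geometric_ennreal) (use rho in auto)
  have "AE x in lebesgue. \<forall>n. g n x \<le> Lq_norm q (g n)"
    unfolding AE_all_countable using True by (simp add: Lq_norm_def AE_le_Inf_ess)
  hence "AE x in lebesgue. G x \<le> D * ennreal (1/(1-\<rho>))"
  proof eventually_elim
    case (elim x)
    have "G x \<le> (\<Sum>n. g n x)" by (rule le)
    also have "\<dots> \<le> (\<Sum>n. D * ennreal (\<rho>^n))"
      by (intro suminf_le) (use elim nb in \<open>auto intro: order_trans\<close>)
    also have "\<dots> = D * ennreal (1/(1-\<rho>))" by (simp only: ennreal_suminf_cmult geo)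
    finally show ?case .
  qed
  thus ?thesis using True unfolding Lq_norm_def by (simp add: Inf_lower)
next
  case False
  have geo: "(\<Sum>n. ennreal (\<rho>^n)) = ennreal (1/(1-\<rho>))"
    by (rule geometric_ennreal) (use rho in auto)
  define Q where "Q = enn2real q"
  have Q1: "1 \<le> Q" using Q_of_q[OF q False] by (simp add: Q_def)
  have Qp: "0 < Q" using Q1 by simp
  have qdef: "\<And>h. Lq_norm q h = epowr (\<integral>\<^sup>+x. epowr (h x) Q \<partial>lebesgue) (1/Q)"
    using False by (simp add: Lq_norm_def Q_def)
  define l where "l n = (1-\<rho>) * \<rho>^n" for n
  have l0: "0 < l n" for n using rho by (simp add: l_def)
  have ls: "(\<Sum>n. ennreal (l n)) \<le> 1"
  proof -
    have "(\<Sum>n. ennreal (l n)) = (\<Sum>n. ennreal (1-\<rho>) * ennreal (\<rho>^n))"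
      using rho by (simp add: l_def ennreal_mult)
    also have "\<dots> = ennreal (1-\<rho>) * ennreal (1/(1-\<rho>))"
      by (simp only: ennreal_suminf_cmult geo)
    also have "\<dots> = 1" using rho by (simp add: ennreal_mult[symmetric])
    finally show ?thesis by simp
  qed
  have int_g: "(\<integral>\<^sup>+x. epowr (g n x) Q \<partial>lebesgue) \<le> epowr D Q * ennreal ((\<rho>^n) powr Q)" for n
  proof -
    have "(\<integral>\<^sup>+x. epowr (g n x) Q \<partial>lebesgue) = epowr (Lq_norm q (g n)) Q"
      using Qp by (simp add: qdef epowr_inv2)
    also have "\<dots> \<le> epowr (D * ennreal (\<rho>^n)) Q" by (rule epowr_mono[OF Qp nb])
    also have "\<dots> = epowr D Q * ennreal ((\<rho>^n) powr Q)"
      using Qp rho by (simp add: epowr_mult epowr_ennreal)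
    finally show ?thesis .
  qed
  have key: "l n powr (1-Q) * ((\<rho>^n) powr Q) = (1-\<rho>) powr (1-Q) * \<rho>^n" for n
  proof -
    have "l n powr (1-Q) = (1-\<rho>) powr (1-Q) * (\<rho>^n) powr (1-Q)"
      using rho by (simp add: l_def powr_mult)
    moreover have "(\<rho>^n) powr (1-Q) * (\<rho>^n) powr Q = \<rho>^n"
      using rho by (simp add: powr_add[symmetric])
    ultimately show ?thesis by (simp add: mult.assoc)
  qed
  have "(\<integral>\<^sup>+x. epowr (G x) Q \<partial>lebesgue) \<le> (\<integral>\<^sup>+x. epowr (\<Sum>n. g n x) Q \<partial>lebesgue)"
    by (intro nn_integral_mono epowr_mono[OF Qp] le)
  also have "\<dots> \<le> (\<integral>\<^sup>+x. (\<Sum>n. ennreal (l n powr (1-Q)) * epowr (g n x) Q) \<partial>lebesgue)"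
    by (intro nn_integral_mono epowr_suminf_jensen[OF Q1 l0 ls])
  also have "\<dots> = (\<Sum>n. ennreal (l n powr (1-Q)) * (\<integral>\<^sup>+x. epowr (g n x) Q \<partial>lebesgue))"
    using meas by (simp add: nn_integral_suminf nn_integral_cmult)
  also have "\<dots> \<le> (\<Sum>n. ennreal (l n powr (1-Q)) * (epowr D Q * ennreal ((\<rho>^n) powr Q)))"
    by (intro suminf_le mult_left_mono int_g) auto
  also have "\<dots> = (\<Sum>n. (epowr D Q * ennreal ((1-\<rho>) powr (1-Q))) * ennreal (\<rho>^n))"
  proof -
    have "ennreal (l n powr (1-Q)) * (epowr D Q * ennreal ((\<rho>^n) powr Q))
        = (epowr D Q * ennreal ((1-\<rho>) powr (1-Q))) * ennreal (\<rho>^n)" for n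
    proof -
      have "ennreal (l n powr (1-Q)) * ennreal ((\<rho>^n) powr Q) = ennreal ((1-\<rho>) powr (1-Q)) * ennreal (\<rho>^n)"
        using rho by (simp add: ennreal_mult[symmetric] key)
      thus ?thesis by (metis mult.assoc mult.commute)
    qed
    thus ?thesis by simp
  qed
  also have "\<dots> = epowr D Q * ennreal ((1-\<rho>) powr (1-Q)) * ennreal (1/(1-\<rho>))"
    by (simp only: ennreal_suminf_cmult geo)
  also have "\<dots> = epowr D Q * ennreal ((1-\<rho>) powr (-Q))"
  proof -
    have "(1-\<rho>) powr (1-Q) * (1/(1-\<rho>)) = (1-\<rho>) powr (-Q)"
      using rho by (simp add: powr_diff powr_minus divide_simps)
    thus ?thesis using rho by (simp add: mult.assoc ennreal_mult[symmetric])
  qed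
  finally have I: "(\<integral>\<^sup>+x. epowr (G x) Q \<partial>lebesgue) \<le> epowr D Q * ennreal ((1-\<rho>) powr (-Q))" .
  have "Lq_norm q G \<le> epowr (epowr D Q * ennreal ((1-\<rho>) powr (-Q))) (1/Q)"
    unfolding qdef using Qp by (intro epowr_mono[OF _ I]) simp
  also have "\<dots> = D * ennreal (((1-\<rho>) powr (-Q)) powr (1/Q))"
    using Qp by (simp add: epowr_mult epowr_inv1 epowr_ennreal)
  also have "((1-\<rho>) powr (-Q)) powr (1/Q) = 1/(1-\<rho>)"
  proof -
    have e: "-Q * (1/Q) = -1" using Qp by simp
    have "((1-\<rho>) powr (-Q)) powr (1/Q) = (1-\<rho>) powr (-1)" by (simp only: powr_powr e)
    thus ?thesis using rho by (simp add: powr_minus_divide)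
  qed
  finally show ?thesis .
qed

lemma ball_measure_const:
  fixes x :: "'a::euclidean_space"
  assumes "t > 0"
  shows "emeasure lebesgue (ball x t) = emeasure lebesgue (ball (0::'a) t)"
  using assms emeasure_lebesgue_ball_conv_unit_ball[of t x] emeasure_lebesgue_ball_conv_unit_ball[of t "0::'a"]
  by simp

lemma local_avg_measurable:
  fixes f :: "'a::euclidean_space \<Rightarrow> real"
  assumes f: "f \<in> borel_measurable lebesgue" and t: "t > 0"
  shows "local_avg r t f \<in> borel_measurable lebesgue"
proof -
  obtain f' where f'[measurable]: "f' \<in> borel_measurable lborel" and ae: "AE y in lborel. f y = f' y"
    using completion_ex_borel_measurable_real[OF f] by blast
  define V where "V = emeasure lebesgue (ball (0::'a) t)"
  have eq: "local_avg r t f x = epowr ((\<integral>\<^sup>+ y. ennreal (\<bar>f' y\<bar> powr r) * indicator (ball x t) y \<partial>lborel) / V) (1/r)" for x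
  proof -
    have "(\<integral>\<^sup>+ y\<in>ball x t. ennreal (\<bar>f y\<bar> powr r) \<partial>lebesgue)
        = (\<integral>\<^sup>+ y. ennreal (\<bar>f y\<bar> powr r) * indicator (ball x t) y \<partial>lborel)"
      by (simp add: nn_integral_completion)
    also have "\<dots> = (\<integral>\<^sup>+ y. ennreal (\<bar>f' y\<bar> powr r) * indicator (ball x t) y \<partial>lborel)"
      by (rule nn_integral_cong_AE) (use ae in auto)
    finally show ?thesis unfolding local_avg_def V_def using ball_measure_const[OF t, of x] by simp
  qed
  have m2: "(\<lambda>(x, y). ennreal (\<bar>f' y\<bar> powr r) * indicator (ball x t) y) \<in> borel_measurable (lborel \<Otimes>\<^sub>M (lborel :: 'a measure))"
  proof -
    have "(\<lambda>z::'a\<times>'a. ennreal (\<bar>f' (snd z)\<bar> powr r) * indicator {z. dist (fst z) (snd z) < t} z)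
          \<in> borel_measurable (lborel \<Otimes>\<^sub>M lborel)"
      by measurable
    moreover have "(\<lambda>(x, y). ennreal (\<bar>f' y\<bar> powr r) * indicator (ball x t) y)
       = (\<lambda>z::'a\<times>'a. ennreal (\<bar>f' (snd z)\<bar> powr r) * indicator {z. dist (fst z) (snd z) < t} z)"
      by (auto simp: fun_eq_iff indicator_def mem_ball)
    ultimately show ?thesis by simp
  qed
  have "(\<lambda>x. \<integral>\<^sup>+ y. ennreal (\<bar>f' y\<bar> powr r) * indicator (ball x t) y \<partial>lborel) \<in> borel_measurable lborel"
    using lborel.borel_measurable_nn_integral[OF m2] by simp
  hence "(\<lambda>x. epowr ((\<integral>\<^sup>+ y. ennreal (\<bar>f' y\<bar> powr r) * indicator (ball x t) y \<partial>lborel) / V) (1/r)) \<in> borel_measurable lborel"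
    by measurable
  hence "(\<lambda>x. epowr ((\<integral>\<^sup>+ y. ennreal (\<bar>f' y\<bar> powr r) * indicator (ball x t) y \<partial>lborel) / V) (1/r)) \<in> borel_measurable lebesgue"
    by (rule measurable_completion)
  moreover have "local_avg r t f = (\<lambda>x. epowr ((\<integral>\<^sup>+ y. ennreal (\<bar>f' y\<bar> powr r) * indicator (ball x t) y \<partial>lborel) / V) (1/r))"
    using eq by (simp add: fun_eq_iff)
  ultimately show ?thesis by simp
qed

lemma local_avg_mono:
  assumes r: "r > 0" and le: "\<And>y. \<bar>g y\<bar> \<le> \<bar>f y\<bar>"
  shows "local_avg r t g x \<le> local_avg r t f x"
proof -
  have "(\<integral>\<^sup>+ y\<in>ball x t. ennreal (\<bar>g y\<bar> powr r) \<partial>lebesgue) \<le> (\<integral>\<^sup>+ y\<in>ball x t. ennreal (\<bar>f y\<bar> powr r) \<partial>lebesgue)"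
    by (intro nn_integral_mono mult_right_mono ennreal_leI powr_mono2) (use r le in auto)
  thus ?thesis unfolding local_avg_def using r
    by (intro epowr_mono divide_right_mono_ennreal) auto
qed

lemma slice_norm_mono:
  assumes q: "q \<ge> 1" and r: "r > 0" and le: "\<And>y. \<bar>g y\<bar> \<le> \<bar>f y\<bar>"
  shows "slice_norm q r t g \<le> slice_norm q r t f"
  unfolding slice_norm_def by (intro Lq_norm_mono[OF q] local_avg_mono[OF r le])

lemma local_avg_decomp:
  fixes f :: "'a::euclidean_space \<Rightarrow> real" and A :: "nat \<Rightarrow> 'a set"
  assumes f[measurable]: "f \<in> borel_measurable lebesgue" and A[measurable]: "\<And>n. A n \<in> sets lebesgue"
    and disj: "disjoint_family A" and cover: "\<And>y. \<exists>n. y \<in> A n" and r: "r \<ge> 1"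
  shows "local_avg r t f x \<le> (\<Sum>n. local_avg r t (\<lambda>y. indicator (A n) y * f y) x)"
proof -
  have ball_m[measurable]: "ball x t \<in> sets lebesgue"
    by (intro sets_completionI_sets) simp
  have pt: "ennreal (\<bar>f y\<bar> powr r) = (\<Sum>n. ennreal (\<bar>indicator (A n) y * f y\<bar> powr r))" for y
  proof -
    obtain m where m: "y \<in> A m" using cover by blast
    have "(\<lambda>n. ennreal (\<bar>indicator (A n) y * f y\<bar> powr r)) = (\<lambda>n. if n = m then ennreal (\<bar>f y\<bar> powr r) else 0)"
    proof
      fix n show "ennreal (\<bar>indicator (A n) y * f y\<bar> powr r) = (if n = m then ennreal (\<bar>f y\<bar> powr r) else 0)"
      proof (cases "n = m")
        case True then show ?thesis using m by simp
      next
        case False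
        hence "y \<notin> A n" using disj m unfolding disjoint_family_on_def by blast
        then show ?thesis using False by simp
      qed
    qed
    thus ?thesis using sums_unique[OF sums_single[of m "\<lambda>_. ennreal (\<bar>f y\<bar> powr r)"]] by simp
  qed
  have I: "(\<integral>\<^sup>+ y\<in>ball x t. ennreal (\<bar>f y\<bar> powr r) \<partial>lebesgue)
     = (\<Sum>n. (\<integral>\<^sup>+ y\<in>ball x t. ennreal (\<bar>indicator (A n) y * f y\<bar> powr r) \<partial>lebesgue))"
  proof -
    have "(\<integral>\<^sup>+ y\<in>ball x t. ennreal (\<bar>f y\<bar> powr r) \<partial>lebesgue)
        = (\<integral>\<^sup>+ y. (\<Sum>n. ennreal (\<bar>indicator (A n) y * f y\<bar> powr r) * indicator (ball x t) y) \<partial>lebesgue)"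
      by (simp add: pt[symmetric])
    also have "\<dots> = (\<Sum>n. (\<integral>\<^sup>+ y\<in>ball x t. ennreal (\<bar>indicator (A n) y * f y\<bar> powr r) \<partial>lebesgue))"
      by (rule nn_integral_suminf) measurable
    finally show ?thesis .
  qed
  have "local_avg r t f x = epowr (\<Sum>n. (\<integral>\<^sup>+ y\<in>ball x t. ennreal (\<bar>indicator (A n) y * f y\<bar> powr r) \<partial>lebesgue) / emeasure lebesgue (ball x t)) (1/r)"
    unfolding local_avg_def I by simp
  also have "\<dots> \<le> (\<Sum>n. epowr ((\<integral>\<^sup>+ y\<in>ball x t. ennreal (\<bar>indicator (A n) y * f y\<bar> powr r) \<partial>lebesgue) / emeasure lebesgue (ball x t)) (1/r))"
    by (rule epowr_suminf_le) (use r in auto)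
  also have "\<dots> = (\<Sum>n. local_avg r t (\<lambda>y. indicator (A n) y * f y) x)"
    unfolding local_avg_def by simp
  finally show ?thesis .
qed

definition pieceA :: "nat \<Rightarrow> 'a::euclidean_space set" where
  "pieceA n = (if n = 0 then cball 0 1 else annulus (int n))"

lemma annulus_sets[measurable]: "(annulus k :: 'a::euclidean_space set) \<in> sets lebesgue"
proof -
  have e: "(annulus k :: 'a set) = cball 0 (2 powr (real_of_int k)) - cball 0 (2 powr (real_of_int k - 1))"
    by (auto simp: annulus_def)
  have "cball (0::'a) (2 powr (real_of_int k)) - cball 0 (2 powr (real_of_int k - 1)) \<in> sets lborel"
    by (intro sets.Diff) (simp_all add: borel_closed)
  hence "cball (0::'a) (2 powr (real_of_int k)) - cball 0 (2 powr (real_of_int k - 1)) \<in> sets lebesgue"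
    by (rule sets_completionI_sets)
  thus ?thesis by (simp only: e)
qed

lemma pieceA_sets[measurable]: "pieceA n \<in> sets lebesgue"
proof -
  have cb: "cball (0::'a) 1 \<in> sets lebesgue" by (intro sets_completionI_sets) simp
  show ?thesis
  proof (cases "n = 0")
    case True
    hence "pieceA n = (cball 0 1 :: 'a set)" by (simp add: pieceA_def)
    then show ?thesis using cb by (simp only:)
  next
    case False
    hence "pieceA n = (annulus (int n) :: 'a set)" by (simp add: pieceA_def)
    then show ?thesis using annulus_sets[of "int n"] by (simp only:)
  qed
qed

lemma annulus_sub_cball: "k \<le> 0 \<Longrightarrow> annulus k \<subseteq> cball (0::'a::euclidean_space) 1"
proof
  fix x :: 'a assume k: "k \<le> 0" and "x \<in> annulus k"
  hence "norm x \<le> 2 powr (real_of_int k)" by (simp add: annulus_def)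
  also have "\<dots> \<le> 2 powr 0" using k by (intro powr_mono) auto
  finally show "x \<in> cball 0 1" by simp
qed

lemma pieceA_disj: "disjoint_family (pieceA :: nat \<Rightarrow> 'a::euclidean_space set)"
  unfolding disjoint_family_on_def
proof (intro ballI impI)
  have main: "pieceA n \<inter> pieceA m = ({} :: 'a set)" if nm: "n < m" for n m
  proof (rule ccontr)
    assume "pieceA n \<inter> pieceA m \<noteq> ({} :: 'a set)"
    then obtain x :: 'a where xn: "x \<in> pieceA n" and xm: "x \<in> pieceA m" by blast
    have m0: "m \<noteq> 0" using nm by simp
    hence low: "2 powr (real m - 1) < norm x" using xm by (simp add: pieceA_def annulus_def)
    have "norm x \<le> 2 powr (real n)"
      using xn by (cases "n = 0") (auto simp: pieceA_def annulus_def)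
    also have "\<dots> \<le> 2 powr (real m - 1)" using nm by (intro powr_mono) auto
    finally show False using low by simp
  qed
  fix n m :: nat assume "n \<in> UNIV" "m \<in> UNIV" "n \<noteq> m"
  then show "pieceA n \<inter> pieceA m = ({} :: 'a set)"
    using main[of n m] main[of m n] by (cases "n < m") (auto simp: Int_commute)
qed

lemma pieceA_cover: "\<exists>n. y \<in> pieceA n"
proof (cases "norm y \<le> 1")
  case True then show ?thesis by (intro exI[of _ 0]) (simp add: pieceA_def)
next
  case False
  hence y1: "norm y > 1" by simp
  define L where "L = log 2 (norm y)"
  have "log 2 1 < log 2 (norm y)" using y1 by (subst log_less_cancel_iff) auto
  hence L0: "L > 0" by (simp add: L_def)
  define n where "n = nat \<lceil>L\<rceil>"
  have n1: "n \<noteq> 0" using L0 by (simp add: n_def)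
  have rn: "real n = of_int \<lceil>L\<rceil>" using L0 by (simp add: n_def)
  have ny: "2 powr L = norm y" unfolding L_def by (rule powr_log_cancel) (use y1 in auto)
  have "L \<le> real n" using rn by simp
  hence up: "norm y \<le> 2 powr real n"
    by (subst ny[symmetric]) (rule powr_mono, auto)
  have "real n - 1 < L" using rn by linarith
  hence lo: "2 powr (real n - 1) < norm y"
    by (subst ny[symmetric]) (rule powr_less_mono, auto)
  show ?thesis using n1 up lo by (intro exI[of _ n]) (simp add: pieceA_def annulus_def)
qed

lemma slice_norm_decay:
  fixes f :: "'a::euclidean_space \<Rightarrow> real"
  assumes f[measurable]: "f \<in> borel_measurable lebesgue" and r: "r \<ge> 1" and t: "t > 0" and q: "q \<ge> 1"
    and rho: "0 < \<rho>" "\<rho> < 1"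
    and nb: "\<And>n. slice_norm q r t (\<lambda>y. indicator (pieceA n) y * f y) \<le> D * ennreal (\<rho>^n)"
  shows "slice_norm q r t f \<le> D * ennreal (1/(1-\<rho>))"
  unfolding slice_norm_def
proof (rule Lq_norm_decay[OF q rho])
  show "local_avg r t (\<lambda>y. indicator (pieceA n) y * f y) \<in> borel_measurable lebesgue" for n
    by (rule local_avg_measurable[OF _ t]) measurable
  show "local_avg r t f x \<le> (\<Sum>n. local_avg r t (\<lambda>y. indicator (pieceA n) y * f y) x)" for x
    by (rule local_avg_decomp[OF f pieceA_sets pieceA_disj pieceA_cover r])
  show "Lq_norm q (local_avg r t (\<lambda>y. indicator (pieceA n) y * f y)) \<le> D * ennreal (\<rho> ^ n)" for n
    using nb[of n] by (simp add: slice_norm_def)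
qed

definition bN where "bN q r t f = slice_norm q r t (\<lambda>x. indicator (cball 0 1) x * f x)"
definition aN where "aN q r t f k = slice_norm q r t (\<lambda>x. indicator (annulus k) x * f x)"

lemma hom_inf: "p = top \<Longrightarrow> hom_herz_norm \<alpha> p q r t f = (SUP k::int. ennreal (2 powr (real_of_int k * \<alpha>)) * aN q r t f k)"
  by (simp add: hom_herz_norm_def aN_def)

lemma hom_fin: "p \<noteq> top \<Longrightarrow> hom_herz_norm \<alpha> p q r t f =
   epowr (\<integral>\<^sup>+k. ennreal (2 powr (real_of_int k * \<alpha> * enn2real p)) * epowr (aN q r t f k) (enn2real p) \<partial>count_space UNIV) (1 / enn2real p)"
  by (simp add: hom_herz_norm_def aN_def)

lemma inhom_inf: "p = top \<Longrightarrow> inhom_herz_norm \<alpha> p q r t f =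
   max (bN q r t f) (SUP k\<in>{1::nat..}. ennreal (2 powr (real k * \<alpha>)) * aN q r t f (int k))"
  by (simp add: inhom_herz_norm_def aN_def bN_def)

lemma inhom_fin: "p \<noteq> top \<Longrightarrow> inhom_herz_norm \<alpha> p q r t f =
   epowr (epowr (bN q r t f) (enn2real p) + (\<Sum>k. ennreal (2 powr (real (Suc k) * \<alpha> * enn2real p)) * epowr (aN q r t f (int (Suc k))) (enn2real p))) (1 / enn2real p)"
  by (simp add: inhom_herz_norm_def aN_def bN_def)

lemma count_space_int_split:
  fixes F :: "int \<Rightarrow> ennreal"
  shows "(\<integral>\<^sup>+k. F k \<partial>count_space UNIV) = (\<Sum>n. F (- int n)) + (\<Sum>n. F (int (Suc n)))"
proof -
  have b1: "bij_betw (\<lambda>n::nat. - int n) UNIV {..0}"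
    unfolding bij_betw_def
  proof
    show "inj_on (\<lambda>n::nat. - int n) UNIV" by (auto simp: inj_on_def)
    show "range (\<lambda>n::nat. - int n) = {..0}"
    proof
      show "range (\<lambda>n::nat. - int n) \<subseteq> {..0}" by auto
      show "{..0} \<subseteq> range (\<lambda>n::nat. - int n)"
      proof
        fix k :: int assume "k \<in> {..0}"
        hence "k = - int (nat (-k))" by simp
        thus "k \<in> range (\<lambda>n::nat. - int n)" by blast
      qed
    qed
  qed
  have b2: "bij_betw (\<lambda>n::nat. int (Suc n)) UNIV {0<..}"
    unfolding bij_betw_def
  proof
    show "inj_on (\<lambda>n::nat. int (Suc n)) UNIV" by (auto simp: inj_on_def)
    show "range (\<lambda>n::nat. int (Suc n)) = {0<..}"
    proof
      show "range (\<lambda>n::nat. int (Suc n)) \<subseteq> {0<..}" by auto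
      show "{0<..} \<subseteq> range (\<lambda>n::nat. int (Suc n))"
      proof
        fix k :: int assume "k \<in> {0<..}"
        hence "k = int (Suc (nat (k - 1)))" by simp
        thus "k \<in> range (\<lambda>n::nat. int (Suc n))" by blast
      qed
    qed
  qed
  have "(\<integral>\<^sup>+k. F k \<partial>count_space UNIV)
      = (\<integral>\<^sup>+k. F k * indicator {..0} k + F k * indicator {0<..} k \<partial>count_space UNIV)"
    by (intro nn_integral_cong) (auto simp: indicator_def)
  also have "\<dots> = (\<integral>\<^sup>+k. F k * indicator {..0} k \<partial>count_space UNIV) + (\<integral>\<^sup>+k. F k * indicator {0<..} k \<partial>count_space UNIV)"
    by (rule nn_integral_add) auto
  also have "(\<integral>\<^sup>+k. F k * indicator {..0} k \<partial>count_space UNIV) = (\<integral>\<^sup>+k. F k \<partial>count_space {..0})"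
    by (simp add: nn_integral_count_space_indicator)
  also have "\<dots> = (\<integral>\<^sup>+n. F (- int n) \<partial>count_space UNIV)"
    by (rule nn_integral_bij_count_space[OF b1, symmetric])
  also have "\<dots> = (\<Sum>n. F (- int n))" by (rule nn_integral_count_space_nat)
  also have "(\<integral>\<^sup>+k. F k * indicator {0<..} k \<partial>count_space UNIV) = (\<integral>\<^sup>+k. F k \<partial>count_space {0<..})"
    by (simp add: nn_integral_count_space_indicator)
  also have "\<dots> = (\<integral>\<^sup>+n. F (int (Suc n)) \<partial>count_space UNIV)"
    by (rule nn_integral_bij_count_space[OF b2, symmetric])
  also have "\<dots> = (\<Sum>n. F (int (Suc n)))" by (rule nn_integral_count_space_nat)
  finally show ?thesis .
qed

lemma P_pos: "p > 0 \<Longrightarrow> p \<noteq> top \<Longrightarrow> enn2real p > 0"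
  by (simp add: enn2real_positive_iff less_top)

lemma mono_b: "q \<ge> 1 \<Longrightarrow> r > 0 \<Longrightarrow> bN q r t f \<le> slice_norm q r t f"
  unfolding bN_def by (rule slice_norm_mono) (auto simp: indicator_def abs_mult)

lemma mono_a: "q \<ge> 1 \<Longrightarrow> r > 0 \<Longrightarrow> k \<le> 0 \<Longrightarrow> aN q r t f k \<le> bN q r t f"
  unfolding bN_def aN_def
  by (rule slice_norm_mono) (use annulus_sub_cball[of k] in \<open>auto simp: indicator_def abs_mult\<close>)

lemma L_b:
  assumes "p > 0"
  shows "bN q r t f \<le> inhom_herz_norm \<alpha> p q r t f"
proof (cases "p = top")
  case True then show ?thesis by (simp add: inhom_inf)
next
  case False
  define P where "P = enn2real p"
  have P: "P > 0" using P_pos[OF assms False] by (simp add: P_def)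
  have "epowr (bN q r t f) P \<le> epowr (bN q r t f) P + (\<Sum>k. ennreal (2 powr (real (Suc k) * \<alpha> * P)) * epowr (aN q r t f (int (Suc k))) P)"
    by simp
  hence "epowr (epowr (bN q r t f) P) (1/P) \<le> epowr (epowr (bN q r t f) P + (\<Sum>k. ennreal (2 powr (real (Suc k) * \<alpha> * P)) * epowr (aN q r t f (int (Suc k))) P)) (1/P)"
    using P by (intro epowr_mono) auto
  thus ?thesis using P False by (simp add: inhom_fin P_def[symmetric] epowr_inv1)
qed

lemma L_a:
  assumes "p > 0" "n \<ge> 1"
  shows "ennreal (2 powr (real n * \<alpha>)) * aN q r t f (int n) \<le> inhom_herz_norm \<alpha> p q r t f"
proof (cases "p = top")
  case True
  have "ennreal (2 powr (real n * \<alpha>)) * aN q r t f (int n) \<le> (SUP k\<in>{1::nat..}. ennreal (2 powr (real k * \<alpha>)) * aN q r t f (int k))"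
    using assms by (intro SUP_upper) auto
  then show ?thesis using True by (simp add: inhom_inf le_max_iff_disj)
next
  case False
  define P where "P = enn2real p"
  have P: "P > 0" using P_pos[OF assms(1) False] by (simp add: P_def)
  obtain m where m: "n = Suc m" using assms(2) by (cases n) auto
  define T where "T = ennreal (2 powr (real (Suc m) * \<alpha> * P)) * epowr (aN q r t f (int (Suc m))) P"
  have "T \<le> (\<Sum>k. ennreal (2 powr (real (Suc k) * \<alpha> * P)) * epowr (aN q r t f (int (Suc k))) P)"
    unfolding T_def by (rule ennreal_le_suminf[where f="\<lambda>k. ennreal (2 powr (real (Suc k) * \<alpha> * P)) * epowr (aN q r t f (int (Suc k))) P"])
  also have "\<dots> \<le> epowr (bN q r t f) P + (\<Sum>k. ennreal (2 powr (real (Suc k) * \<alpha> * P)) * epowr (aN q r t f (int (Suc k))) P)"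
    by simp
  finally have "epowr T (1/P) \<le> inhom_herz_norm \<alpha> p q r t f"
    using P False by (simp add: inhom_fin P_def[symmetric] epowr_mono)
  moreover have "epowr T (1/P) = ennreal (2 powr (real n * \<alpha>)) * aN q r t f (int n)"
  proof -
    have "(2 powr (real (Suc m) * \<alpha> * P)) powr (1/P) = 2 powr (real n * \<alpha>)"
      using P m by (simp add: powr_powr)
    thus ?thesis using P m unfolding T_def by (simp add: epowr_mult epowr_ennreal epowr_inv1)
  qed
  ultimately show ?thesis by simp
qed

lemma L_N:
  fixes f :: "'a::euclidean_space \<Rightarrow> real"
  assumes "\<alpha> > 0" "t > 0" "p > 0" "r > 1" "q \<ge> 1" and f: "f \<in> borel_measurable lebesgue"
  shows "slice_norm q r t f \<le> inhom_herz_norm \<alpha> p q r t f * ennreal (1 / (1 - 2 powr (-\<alpha>)))"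
proof (rule slice_norm_decay[OF f _ assms(2,5)])
  show "r \<ge> 1" using assms by simp
  show "0 < 2 powr (-\<alpha>)" by simp
  show "2 powr (-\<alpha>) < (1::real)" using assms(1) by (simp add: powr_less_one)
  fix n :: nat
  show "slice_norm q r t (\<lambda>y. indicator (pieceA n) y * f y) \<le> inhom_herz_norm \<alpha> p q r t f * ennreal ((2 powr (-\<alpha>))^n)"
  proof (cases "n = 0")
    case True
    then show ?thesis using L_b[OF assms(3), of q r t f \<alpha>] by (simp add: pieceA_def bN_def)
  next
    case False
    have e: "(2 powr (-\<alpha>))^n * 2 powr (real n * \<alpha>) = 1"
      by (simp add: powr_power powr_add[symmetric])
    have "slice_norm q r t (\<lambda>y. indicator (pieceA n) y * f y) = aN q r t f (int n)"
      using False by (simp add: pieceA_def aN_def)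
    also have "\<dots> = ennreal ((2 powr (-\<alpha>))^n) * (ennreal (2 powr (real n * \<alpha>)) * aN q r t f (int n))"
      using e by (simp add: mult.assoc[symmetric] ennreal_mult[symmetric])
    also have "\<dots> \<le> ennreal ((2 powr (-\<alpha>))^n) * inhom_herz_norm \<alpha> p q r t f"
      using False by (intro mult_left_mono L_a[OF assms(3)]) auto
    finally show ?thesis by (simp add: mult.commute)
  qed
qed

definition Kh :: "real \<Rightarrow> ennreal \<Rightarrow> real" where
  "Kh \<alpha> p = (if p = top then 1 else (1 / (1 - 2 powr (-\<alpha> * enn2real p))) powr (1 / enn2real p))"

definition Ki :: "ennreal \<Rightarrow> real" where
  "Ki p = (if p = top then 1 else 2 powr (1 / enn2real p))"

lemma L_hom:
  assumes a: "\<alpha> > 0" and p: "p > 0" and r: "r > 0" and q: "q \<ge> 1"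
  shows "hom_herz_norm \<alpha> p q r t f \<le> ennreal (Kh \<alpha> p) * inhom_herz_norm \<alpha> p q r t f"
proof (cases "p = top")
  case True
  have "ennreal (2 powr (real_of_int k * \<alpha>)) * aN q r t f k \<le> inhom_herz_norm \<alpha> p q r t f" for k
  proof (cases "k \<le> 0")
    case True
    have "2 powr (real_of_int k * \<alpha>) \<le> 2 powr 0"
      using True a by (intro powr_mono) (auto simp: mult_nonpos_nonneg)
    hence "ennreal (2 powr (real_of_int k * \<alpha>)) \<le> 1" by simp
    hence "ennreal (2 powr (real_of_int k * \<alpha>)) * aN q r t f k \<le> 1 * bN q r t f"
      by (intro mult_mono mono_a[OF q r True]) auto
    also have "\<dots> \<le> inhom_herz_norm \<alpha> p q r t f" using L_b[OF p] by simp
    finally show ?thesis .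
  next
    case False
    then obtain n where n: "k = int n" "n \<ge> 1"
      by (intro that[of "nat k"]) auto
    show ?thesis using L_a[OF p n(2)] n(1) by simp
  qed
  thus ?thesis using True by (simp add: hom_inf Kh_def SUP_least)
next
  case False
  define P where "P = enn2real p"
  have P: "P > 0" using P_pos[OF p False] by (simp add: P_def)
  define \<sigma> where "\<sigma> = 2 powr (-\<alpha> * P)"
  have \<sigma>: "0 < \<sigma>" "\<sigma> < 1" using a P by (auto simp: \<sigma>_def powr_less_one mult_pos_pos)
  define K0 where "K0 = 1 / (1 - \<sigma>)"
  have K01: "1 \<le> K0" using \<sigma> by (simp add: K0_def)
  define F where "F k = ennreal (2 powr (real_of_int k * \<alpha> * P)) * epowr (aN q r t f k) P" for k
  define S where "S = (\<Sum>n. ennreal (2 powr (real (Suc n) * \<alpha> * P)) * epowr (aN q r t f (int (Suc n))) P)"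
  define b where "b = bN q r t f"
  have FS: "(\<Sum>n. F (int (Suc n))) = S" by (simp add: F_def S_def)
  have Fneg: "F (- int n) \<le> ennreal (\<sigma>^n) * epowr b P" for n
  proof -
    have "\<sigma>^n = 2 powr (real_of_int (- int n) * \<alpha> * P)"
      by (simp add: \<sigma>_def powr_power mult.assoc)
    moreover have "epowr (aN q r t f (- int n)) P \<le> epowr b P"
      unfolding b_def by (intro epowr_mono[OF P] mono_a[OF q r]) simp
    ultimately show ?thesis unfolding F_def by (intro mult_mono) auto
  qed
  have geo: "(\<Sum>n. ennreal (\<sigma>^n)) = ennreal K0"
    unfolding K0_def by (rule geometric_ennreal) (use \<sigma> in auto)
  have "(\<Sum>n. F (- int n)) \<le> (\<Sum>n. ennreal (\<sigma>^n) * epowr b P)"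
    by (intro suminf_le Fneg) auto
  also have "\<dots> = ennreal K0 * epowr b P" by (simp only: ennreal_suminf_multc geo)
  finally have neg: "(\<Sum>n. F (- int n)) \<le> ennreal K0 * epowr b P" .
  have "(\<integral>\<^sup>+k. F k \<partial>count_space UNIV) = (\<Sum>n. F (- int n)) + S"
    using count_space_int_split[of F] FS by simp
  also have "\<dots> \<le> ennreal K0 * epowr b P + ennreal K0 * S"
  proof (intro add_mono neg)
    have "S = 1 * S" by simp
    also have "\<dots> \<le> ennreal K0 * S" using K01 by (intro mult_right_mono) auto
    finally show "S \<le> ennreal K0 * S" .
  qed
  also have "\<dots> = ennreal K0 * (epowr b P + S)" by (simp add: distrib_left)
  finally have I: "(\<integral>\<^sup>+k. F k \<partial>count_space UNIV) \<le> ennreal K0 * (epowr b P + S)" .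
  have "hom_herz_norm \<alpha> p q r t f = epowr (\<integral>\<^sup>+k. F k \<partial>count_space UNIV) (1/P)"
    using False by (simp add: hom_fin F_def P_def)
  also have "\<dots> \<le> epowr (ennreal K0 * (epowr b P + S)) (1/P)"
    using P by (intro epowr_mono I) auto
  also have "\<dots> = ennreal (K0 powr (1/P)) * epowr (epowr b P + S) (1/P)"
    using P K01 by (simp add: epowr_mult epowr_ennreal)
  also have "\<dots> = ennreal (Kh \<alpha> p) * inhom_herz_norm \<alpha> p q r t f"
    using False by (simp add: inhom_fin Kh_def K0_def \<sigma>_def P_def[symmetric] b_def S_def)
  finally show ?thesis .
qed

lemma L_inh:
  assumes p: "p > 0" and r: "r > 0" and q: "q \<ge> 1"
  shows "inhom_herz_norm \<alpha> p q r t f \<le> ennreal (Ki p) * (hom_herz_norm \<alpha> p q r t f + slice_norm q r t f)"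
proof (cases "p = top")
  case True
  have "bN q r t f \<le> hom_herz_norm \<alpha> p q r t f + slice_norm q r t f"
    using mono_b[OF q r, of t f] by (simp add: add_increasing)
  moreover have "(SUP k\<in>{1::nat..}. ennreal (2 powr (real k * \<alpha>)) * aN q r t f (int k)) \<le> hom_herz_norm \<alpha> p q r t f + slice_norm q r t f"
  proof (rule SUP_least)
    fix k :: nat
    have "ennreal (2 powr (real k * \<alpha>)) * aN q r t f (int k) \<le> hom_herz_norm \<alpha> p q r t f"
      using True by (simp add: hom_inf) (rule SUP_upper2[of "int k"], auto)
    thus "ennreal (2 powr (real k * \<alpha>)) * aN q r t f (int k) \<le> hom_herz_norm \<alpha> p q r t f + slice_norm q r t f"
      by (simp add: add_increasing2)
  qed
  ultimately show ?thesis using True by (simp add: inhom_inf Ki_def)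
next
  case False
  define P where "P = enn2real p"
  have P: "P > 0" using P_pos[OF p False] by (simp add: P_def)
  define F where "F k = ennreal (2 powr (real_of_int k * \<alpha> * P)) * epowr (aN q r t f k) P" for k
  define S where "S = (\<Sum>n. ennreal (2 powr (real (Suc n) * \<alpha> * P)) * epowr (aN q r t f (int (Suc n))) P)"
  have FS: "(\<Sum>n. F (int (Suc n))) = S" by (simp add: F_def S_def)
  have "(\<integral>\<^sup>+k. F k \<partial>count_space UNIV) = (\<Sum>n. F (- int n)) + S"
    using count_space_int_split[of F] FS by simp
  hence S_le: "S \<le> epowr (hom_herz_norm \<alpha> p q r t f) P"
    using False P by (simp add: hom_fin F_def P_def[symmetric] epowr_inv2)
  have b_le: "epowr (bN q r t f) P \<le> epowr (slice_norm q r t f) P"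
    by (intro epowr_mono[OF P] mono_b[OF q r])
  have "inhom_herz_norm \<alpha> p q r t f = epowr (epowr (bN q r t f) P + S) (1/P)"
    using False by (simp add: inhom_fin P_def S_def)
  also have "\<dots> \<le> epowr (epowr (slice_norm q r t f) P + epowr (hom_herz_norm \<alpha> p q r t f) P) (1/P)"
    using P by (intro epowr_mono add_mono b_le S_le) auto
  also have "\<dots> \<le> ennreal (2 powr (1/P)) * (slice_norm q r t f + hom_herz_norm \<alpha> p q r t f)"
    by (rule epowr_add_le[OF P])
  also have "\<dots> = ennreal (Ki p) * (hom_herz_norm \<alpha> p q r t f + slice_norm q r t f)"
    using False by (simp add: Ki_def P_def add.commute)
  finally show ?thesis .
qed

lemma herz_bounds:
  fixes f :: "'a::euclidean_space \<Rightarrow> real"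
  assumes a: "\<alpha> > 0" and t: "t > 0" and p: "p > 0" and r: "r > 1" and q: "q \<ge> 1"
    and f: "f \<in> borel_measurable lebesgue"
  shows "hom_herz_norm \<alpha> p q r t f + slice_norm q r t f
           \<le> ennreal (max (Kh \<alpha> p + 1/(1 - 2 powr (-\<alpha>))) (Ki p)) * inhom_herz_norm \<alpha> p q r t f"
    and "inhom_herz_norm \<alpha> p q r t f
           \<le> ennreal (max (Kh \<alpha> p + 1/(1 - 2 powr (-\<alpha>))) (Ki p)) * (hom_herz_norm \<alpha> p q r t f + slice_norm q r t f)"
proof -
  have r0: "r > 0" using r by simp
  have c0: "0 \<le> 1/(1 - 2 powr (-\<alpha>))" using a by (simp add: powr_less_one less_imp_le)
  have kh0: "0 \<le> Kh \<alpha> p" by (simp add: Kh_def)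
  have "hom_herz_norm \<alpha> p q r t f + slice_norm q r t f
      \<le> ennreal (Kh \<alpha> p) * inhom_herz_norm \<alpha> p q r t f + inhom_herz_norm \<alpha> p q r t f * ennreal (1/(1 - 2 powr (-\<alpha>)))"
    by (rule add_mono[OF L_hom[OF a p r0 q] L_N[OF a t p r q f]])
  also have "\<dots> = (ennreal (Kh \<alpha> p) + ennreal (1/(1 - 2 powr (-\<alpha>)))) * inhom_herz_norm \<alpha> p q r t f"
    by (simp only: mult.commute[of "inhom_herz_norm \<alpha> p q r t f"] distrib_right)
  also have "\<dots> = ennreal (Kh \<alpha> p + 1/(1 - 2 powr (-\<alpha>))) * inhom_herz_norm \<alpha> p q r t f"
    by (subst ennreal_plus[OF kh0 c0]) (rule refl)
  also have "\<dots> \<le> ennreal (max (Kh \<alpha> p + 1/(1 - 2 powr (-\<alpha>))) (Ki p)) * inhom_herz_norm \<alpha> p q r t f"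
    by (intro mult_right_mono ennreal_leI) auto
  finally show "hom_herz_norm \<alpha> p q r t f + slice_norm q r t f
           \<le> ennreal (max (Kh \<alpha> p + 1/(1 - 2 powr (-\<alpha>))) (Ki p)) * inhom_herz_norm \<alpha> p q r t f" .
  have "inhom_herz_norm \<alpha> p q r t f \<le> ennreal (Ki p) * (hom_herz_norm \<alpha> p q r t f + slice_norm q r t f)"
    by (rule L_inh[OF p r0 q])
  also have "\<dots> \<le> ennreal (max (Kh \<alpha> p + 1/(1 - 2 powr (-\<alpha>))) (Ki p)) * (hom_herz_norm \<alpha> p q r t f + slice_norm q r t f)"
    by (intro mult_right_mono ennreal_leI) auto
  finally show "inhom_herz_norm \<alpha> p q r t f
           \<le> ennreal (max (Kh \<alpha> p + 1/(1 - 2 powr (-\<alpha>))) (Ki p)) * (hom_herz_norm \<alpha> p q r t f + slice_norm q r t f)" .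
qed

theorem proposition3p3:
  fixes \<alpha> t r :: real and p q :: ennreal
  assumes "\<alpha> > 0" and "t > 0" and "p > 0" and "r > 1" and "q \<ge> 1"
  shows "(inhom_herz_space \<alpha> p q r t :: ('a::euclidean_space \<Rightarrow> real) set)
           = hom_herz_space \<alpha> p q r t \<inter> slice_space q r t
         \<and> (\<exists>C::real. C > 0 \<and>
           (\<forall>f :: 'a::euclidean_space \<Rightarrow> real. f \<in> hom_herz_space \<alpha> p q r t \<inter> slice_space q r t \<longrightarrow>
              ennreal (1 / C) * (hom_herz_norm \<alpha> p q r t f + slice_norm q r t f) \<le> inhom_herz_norm \<alpha> p q r t f
            \<and> inhom_herz_norm \<alpha> p q r t f \<le> ennreal C * (hom_herz_norm \<alpha> p q r t f + slice_norm q r t f)))"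
proof -
  define K where "K = max (Kh \<alpha> p + 1/(1 - 2 powr (-\<alpha>))) (Ki p)"
  have Ki0: "Ki p > 0" by (simp add: Ki_def)
  have K0: "K > 0" unfolding K_def using Ki0 by (simp add: less_max_iff_disj)
  note B1 = herz_bounds(1)[OF assms, folded K_def]
  note B2 = herz_bounds(2)[OF assms, folded K_def]
  have seteq: "(inhom_herz_space \<alpha> p q r t :: ('a \<Rightarrow> real) set) = hom_herz_space \<alpha> p q r t \<inter> slice_space q r t"
  proof (intro set_eqI iffI)
    fix f :: "'a \<Rightarrow> real"
    assume "f \<in> inhom_herz_space \<alpha> p q r t"
    hence fm: "f \<in> borel_measurable lebesgue" and fi: "inhom_herz_norm \<alpha> p q r t f < top"
      by (auto simp: inhom_herz_space_def)
    have "hom_herz_norm \<alpha> p q r t f + slice_norm q r t f \<le> ennreal K * inhom_herz_norm \<alpha> p q r t f"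
      by (rule B1[OF fm])
    also have "\<dots> < top" using fi by (simp add: ennreal_mult_less_top)
    finally have "hom_herz_norm \<alpha> p q r t f < top" "slice_norm q r t f < top" by auto
    thus "f \<in> hom_herz_space \<alpha> p q r t \<inter> slice_space q r t"
      using fm by (simp add: hom_herz_space_def slice_space_def)
  next
    fix f :: "'a \<Rightarrow> real"
    assume "f \<in> hom_herz_space \<alpha> p q r t \<inter> slice_space q r t"
    hence fm: "f \<in> borel_measurable lebesgue" and fi: "hom_herz_norm \<alpha> p q r t f < top" "slice_norm q r t f < top"
      by (auto simp: hom_herz_space_def slice_space_def)
    have "inhom_herz_norm \<alpha> p q r t f \<le> ennreal K * (hom_herz_norm \<alpha> p q r t f + slice_norm q r t f)"
      by (rule B2[OF fm])
    also have "\<dots> < top" using fi by (simp add: ennreal_mult_less_top)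
    finally show "f \<in> inhom_herz_space \<alpha> p q r t"
      using fm by (simp add: inhom_herz_space_def)
  qed
  have "\<forall>f :: 'a \<Rightarrow> real. f \<in> hom_herz_space \<alpha> p q r t \<inter> slice_space q r t \<longrightarrow>
              ennreal (1 / K) * (hom_herz_norm \<alpha> p q r t f + slice_norm q r t f) \<le> inhom_herz_norm \<alpha> p q r t f
            \<and> inhom_herz_norm \<alpha> p q r t f \<le> ennreal K * (hom_herz_norm \<alpha> p q r t f + slice_norm q r t f)"
  proof (intro allI impI conjI)
    fix f :: "'a \<Rightarrow> real"
    assume "f \<in> hom_herz_space \<alpha> p q r t \<inter> slice_space q r t"
    hence fm: "f \<in> borel_measurable lebesgue" by (auto simp: hom_herz_space_def)
    have "ennreal (1 / K) * (hom_herz_norm \<alpha> p q r t f + slice_norm q r t f)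
        \<le> ennreal (1 / K) * (ennreal K * inhom_herz_norm \<alpha> p q r t f)"
      by (intro mult_left_mono B1[OF fm]) simp
    also have "\<dots> = (ennreal (1 / K) * ennreal K) * inhom_herz_norm \<alpha> p q r t f"
      by (simp add: mult.assoc)
    also have "ennreal (1 / K) * ennreal K = 1"
      using K0 by (simp add: ennreal_mult[symmetric])
    finally show "ennreal (1 / K) * (hom_herz_norm \<alpha> p q r t f + slice_norm q r t f) \<le> inhom_herz_norm \<alpha> p q r t f"
      by simp
    show "inhom_herz_norm \<alpha> p q r t f \<le> ennreal K * (hom_herz_norm \<alpha> p q r t f + slice_norm q r t f)"
      by (rule B2[OF fm])
  qed
  thus ?thesis using seteq K0 by blast
qed

end
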